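(* Let $R$ be a commutative ring with identity, $I,J$ ideals of $R$, and $N$ an injective cogenerator of the category of $R$-modules. If $N$ is $I$-reduced, then $N$ is $I$-coreduced. If $N$ is $(I,J)$-prime, then $N$ is $(I,J)$-coprime.
   Context: All rings are commutative with identity and modules are unital. An $R$-module $M$ is $I$-reduced if for all $m\in M$, $I^2m=0$ implies $Im=0$; $I$-coreduced if $IM=I^2M$; $(I,J)$-prime if for all $m\in M$, $IJm=0$ implies $Im=0$ or $Jm=0$; $(I,J)$-coprime if $IJM=IM$ or $IJM=JM$. *)

theory Defs
  imports "HOL-Algebra.Module" "HOL-Algebra.Ideal_Product"
begin

definition mod_hom :: "('a, 'c) ring_scheme \<Rightarrow> ('a, 'b) module \<Rightarrow> ('a, 'd) module \<Rightarrow> ('b \<Rightarrow> 'd) \<Rightarrow> bool" where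
  "mod_hom R M M' f \<longleftrightarrow>
     f \<in> carrier M \<rightarrow> carrier M' \<and>
     (\<forall>x\<in>carrier M. \<forall>y\<in>carrier M. f (x \<oplus>\<^bsub>M\<^esub> y) = f x \<oplus>\<^bsub>M'\<^esub> f y) \<and>
     (\<forall>a\<in>carrier R. \<forall>x\<in>carrier M. f (a \<odot>\<^bsub>M\<^esub> x) = a \<odot>\<^bsub>M'\<^esub> f x)"

text \<open>Injective module, tested against all R-modules whose carrier lives in the type 'm.\<close>
definition injective_module :: "'m itself \<Rightarrow> ('a, 'c) ring_scheme \<Rightarrow> ('a, 'b) module \<Rightarrow> bool" where
  "injective_module (_::'m itself) R N \<longleftrightarrow> module R N \<and>
     (\<forall>(A::('a,'m) module) (B::('a,'m) module) f g.
        module R A \<longrightarrow> module R B \<longrightarrow> mod_hom R A B f \<longrightarrow> inj_on f (carrier A) \<longrightarrow>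
        mod_hom R A N g \<longrightarrow>
        (\<exists>h. mod_hom R B N h \<and> (\<forall>x\<in>carrier A. h (f x) = g x)))"

definition cogenerator_module :: "'m itself \<Rightarrow> ('a, 'c) ring_scheme \<Rightarrow> ('a, 'b) module \<Rightarrow> bool" where
  "cogenerator_module (_::'m itself) R N \<longleftrightarrow> module R N \<and>
     (\<forall>(M::('a,'m) module). module R M \<longrightarrow>
        (\<forall>m\<in>carrier M. m \<noteq> \<zero>\<^bsub>M\<^esub> \<longrightarrow> (\<exists>f. mod_hom R M N f \<and> f m \<noteq> \<zero>\<^bsub>N\<^esub>)))"

definition ideal_kills :: "('a, 'b) module \<Rightarrow> 'a set \<Rightarrow> 'b \<Rightarrow> bool" where
  "ideal_kills M I m \<longleftrightarrow> (\<forall>a\<in>I. a \<odot>\<^bsub>M\<^esub> m = \<zero>\<^bsub>M\<^esub>)"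

text \<open>The submodule IM: the smallest submodule containing all a m with a in I, m in M
  (i.e. the set of finite sums of such products).\<close>
definition ideal_module :: "('a, 'c) ring_scheme \<Rightarrow> ('a, 'b) module \<Rightarrow> 'a set \<Rightarrow> 'b set" where
  "ideal_module R M I = \<Inter>{H. submodule H R M \<and> {a \<odot>\<^bsub>M\<^esub> m | a m. a \<in> I \<and> m \<in> carrier M} \<subseteq> H}"

definition I_reduced :: "('a, 'c) ring_scheme \<Rightarrow> ('a, 'b) module \<Rightarrow> 'a set \<Rightarrow> bool" where
  "I_reduced R M I \<longleftrightarrow> (\<forall>m\<in>carrier M. ideal_kills M (I \<cdot>\<^bsub>R\<^esub> I) m \<longrightarrow> ideal_kills M I m)"

definition I_coreduced :: "('a, 'c) ring_scheme \<Rightarrow> ('a, 'b) module \<Rightarrow> 'a set \<Rightarrow> bool" where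
  "I_coreduced R M I \<longleftrightarrow> ideal_module R M I = ideal_module R M (I \<cdot>\<^bsub>R\<^esub> I)"

definition IJ_prime :: "('a, 'c) ring_scheme \<Rightarrow> ('a, 'b) module \<Rightarrow> 'a set \<Rightarrow> 'a set \<Rightarrow> bool" where
  "IJ_prime R M I J \<longleftrightarrow> (\<forall>m\<in>carrier M. ideal_kills M (I \<cdot>\<^bsub>R\<^esub> J) m \<longrightarrow>
      ideal_kills M I m \<or> ideal_kills M J m)"

definition IJ_coprime :: "('a, 'c) ring_scheme \<Rightarrow> ('a, 'b) module \<Rightarrow> 'a set \<Rightarrow> 'a set \<Rightarrow> bool" where
  "IJ_coprime R M I J \<longleftrightarrow> ideal_module R M (I \<cdot>\<^bsub>R\<^esub> J) = ideal_module R M I \<or>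
      ideal_module R M (I \<cdot>\<^bsub>R\<^esub> J) = ideal_module R M J"

end

theory Submission
  imports Defs
begin

definition qcls :: "('a, 'n, 'e) module_scheme \<Rightarrow> 'n set \<Rightarrow> 'n \<Rightarrow> ('a + 'n) set" where
  "qcls N S x = Inr ` {y \<in> carrier N. y \<ominus>\<^bsub>N\<^esub> x \<in> S}"

definition qrep :: "('a, 'n, 'e) module_scheme \<Rightarrow> 'n set \<Rightarrow> ('a + 'n) set \<Rightarrow> 'n" where
  "qrep N S X = (SOME x. x \<in> carrier N \<and> X = qcls N S x)"

definition qmod :: "('a, 'n, 'e) module_scheme \<Rightarrow> 'n set \<Rightarrow> ('a, ('a + 'n) set) module" where
  "qmod N S = \<lparr>carrier = qcls N S ` carrier N, mult = (\<lambda>X Y. X), one = {},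
     zero = qcls N S \<zero>\<^bsub>N\<^esub>,
     add = (\<lambda>X Y. qcls N S (qrep N S X \<oplus>\<^bsub>N\<^esub> qrep N S Y)),
     smult = (\<lambda>r X. qcls N S (r \<odot>\<^bsub>N\<^esub> qrep N S X))\<rparr>"

lemma (in abelian_group) diff_add4:
  assumes "x \<in> carrier G" "y \<in> carrier G" "u \<in> carrier G" "v \<in> carrier G"
  shows "(u \<oplus> v) \<ominus> (x \<oplus> y) = (u \<ominus> x) \<oplus> (v \<ominus> y)"
  using assms by (simp add: minus_eq minus_add a_ac)

lemma (in abelian_group) diff_trans:
  assumes "x \<in> carrier G" "y \<in> carrier G" "z \<in> carrier G"
  shows "z \<ominus> y = (z \<ominus> x) \<oplus> (x \<ominus> y)"
  using assms by (simp add: minus_eq a_assoc r_neg1)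

lemma (in abelian_group) diff_swap:
  assumes "x \<in> carrier G" "y \<in> carrier G"
  shows "y \<ominus> x = \<ominus> (x \<ominus> y)"
  using assms by (simp add: minus_eq minus_add a_ac)

lemma (in module) qcls_eq:
  assumes S: "submodule S R M" and x: "x \<in> carrier M" and y: "y \<in> carrier M"
  shows "qcls M S x = qcls M S y \<longleftrightarrow> x \<ominus>\<^bsub>M\<^esub> y \<in> S"
proof
  assume h: "qcls M S x = qcls M S y"
  have "\<zero>\<^bsub>M\<^esub> \<in> S" using subgroup.one_closed[OF submodule.axioms(1)[OF S]] by simp
  moreover have "x \<ominus>\<^bsub>M\<^esub> x = \<zero>\<^bsub>M\<^esub>" using x by (simp add: M.minus_eq M.r_neg)
  ultimately have "x \<ominus>\<^bsub>M\<^esub> x \<in> S" by simp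
  hence "Inr x \<in> qcls M S x" using x unfolding qcls_def by auto
  hence "Inr x \<in> qcls M S y" using h by simp
  thus "x \<ominus>\<^bsub>M\<^esub> y \<in> S" unfolding qcls_def by auto
next
  assume h: "x \<ominus>\<^bsub>M\<^esub> y \<in> S"
  have h2: "y \<ominus>\<^bsub>M\<^esub> x \<in> S" using diff_swap[OF x y] h submoduleE(3)[OF S] by simp
  have "{z \<in> carrier M. z \<ominus>\<^bsub>M\<^esub> x \<in> S} = {z \<in> carrier M. z \<ominus>\<^bsub>M\<^esub> y \<in> S}"
  proof (intro Collect_cong conj_cong refl iffI)
    fix z assume z: "z \<in> carrier M" and "z \<ominus>\<^bsub>M\<^esub> x \<in> S"
    thus "z \<ominus>\<^bsub>M\<^esub> y \<in> S" using diff_trans[OF x y z] h submoduleE(5)[OF S] by simp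
  next
    fix z assume z: "z \<in> carrier M" and "z \<ominus>\<^bsub>M\<^esub> y \<in> S"
    thus "z \<ominus>\<^bsub>M\<^esub> x \<in> S" using diff_trans[OF y x z] h2 submoduleE(5)[OF S] by simp
  qed
  thus "qcls M S x = qcls M S y" unfolding qcls_def by simp
qed

lemma (in module) qrep_cls:
  assumes S: "submodule S R M" and x: "x \<in> carrier M"
  shows "qrep M S (qcls M S x) \<in> carrier M \<and> qrep M S (qcls M S x) \<ominus>\<^bsub>M\<^esub> x \<in> S"
proof -
  have "\<exists>z. z \<in> carrier M \<and> qcls M S x = qcls M S z" using x by blast
  hence "qrep M S (qcls M S x) \<in> carrier M \<and> qcls M S x = qcls M S (qrep M S (qcls M S x))"
    unfolding qrep_def by (rule someI_ex)
  thus ?thesis using qcls_eq[OF S] x by metis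
qed

lemma (in module) qadd:
  assumes S: "submodule S R M" and x: "x \<in> carrier M" and y: "y \<in> carrier M"
  shows "qcls M S x \<oplus>\<^bsub>qmod M S\<^esub> qcls M S y = qcls M S (x \<oplus>\<^bsub>M\<^esub> y)"
proof -
  let ?u = "qrep M S (qcls M S x)" and ?v = "qrep M S (qcls M S y)"
  have u: "?u \<in> carrier M" "?u \<ominus>\<^bsub>M\<^esub> x \<in> S" using qrep_cls[OF S x] by auto
  have v: "?v \<in> carrier M" "?v \<ominus>\<^bsub>M\<^esub> y \<in> S" using qrep_cls[OF S y] by auto
  have "(?u \<oplus>\<^bsub>M\<^esub> ?v) \<ominus>\<^bsub>M\<^esub> (x \<oplus>\<^bsub>M\<^esub> y) \<in> S"
    using diff_add4[OF x y u(1) v(1)] u v submoduleE(5)[OF S] by simp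
  thus ?thesis unfolding qmod_def using qcls_eq[OF S] u v x y by simp
qed

lemma (in module) qsmult:
  assumes S: "submodule S R M" and x: "x \<in> carrier M" and r: "r \<in> carrier R"
  shows "r \<odot>\<^bsub>qmod M S\<^esub> qcls M S x = qcls M S (r \<odot>\<^bsub>M\<^esub> x)"
proof -
  let ?u = "qrep M S (qcls M S x)"
  have u: "?u \<in> carrier M" "?u \<ominus>\<^bsub>M\<^esub> x \<in> S" using qrep_cls[OF S x] by auto
  have "r \<odot>\<^bsub>M\<^esub> ?u \<ominus>\<^bsub>M\<^esub> r \<odot>\<^bsub>M\<^esub> x = r \<odot>\<^bsub>M\<^esub> (?u \<ominus>\<^bsub>M\<^esub> x)"
    using u x r by (simp add: M.minus_eq smult_r_distr smult_r_minus)
  also have "\<dots> \<in> S" using u r submoduleE(4)[OF S] by simp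
  finally show ?thesis unfolding qmod_def using qcls_eq[OF S] u x r by simp
qed

lemma (in module) qmod_module:
  assumes S: "submodule S R M"
  shows "module R (qmod M S)"
proof -
  have car: "carrier (qmod M S) = qcls M S ` carrier M" by (simp add: qmod_def)
  have zer: "\<zero>\<^bsub>qmod M S\<^esub> = qcls M S \<zero>\<^bsub>M\<^esub>" by (simp add: qmod_def)
  note qa = qadd[OF S] and qs = qsmult[OF S]
  have ag: "abelian_group (qmod M S)"
  proof (rule abelian_groupI)
    fix X Y assume "X \<in> carrier (qmod M S)" "Y \<in> carrier (qmod M S)"
    then show "X \<oplus>\<^bsub>qmod M S\<^esub> Y \<in> carrier (qmod M S)" unfolding car using qa by auto
  next
    show "\<zero>\<^bsub>qmod M S\<^esub> \<in> carrier (qmod M S)" unfolding car zer by simp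
  next
    fix X Y Z assume "X \<in> carrier (qmod M S)" "Y \<in> carrier (qmod M S)" "Z \<in> carrier (qmod M S)"
    then show "X \<oplus>\<^bsub>qmod M S\<^esub> Y \<oplus>\<^bsub>qmod M S\<^esub> Z = X \<oplus>\<^bsub>qmod M S\<^esub> (Y \<oplus>\<^bsub>qmod M S\<^esub> Z)"
      unfolding car using qa by (auto simp: M.a_assoc)
  next
    fix X Y assume "X \<in> carrier (qmod M S)" "Y \<in> carrier (qmod M S)"
    then show "X \<oplus>\<^bsub>qmod M S\<^esub> Y = Y \<oplus>\<^bsub>qmod M S\<^esub> X"
      unfolding car using qa by (auto simp: M.a_comm)
  next
    fix X assume "X \<in> carrier (qmod M S)"
    then show "\<zero>\<^bsub>qmod M S\<^esub> \<oplus>\<^bsub>qmod M S\<^esub> X = X"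
      unfolding car zer using qa by auto
  next
    fix X assume "X \<in> carrier (qmod M S)"
    then obtain x where x: "x \<in> carrier M" "X = qcls M S x" unfolding car by auto
    have "qcls M S (\<ominus>\<^bsub>M\<^esub> x) \<oplus>\<^bsub>qmod M S\<^esub> X = \<zero>\<^bsub>qmod M S\<^esub>"
      using x qa zer by (simp add: M.l_neg)
    moreover have "qcls M S (\<ominus>\<^bsub>M\<^esub> x) \<in> carrier (qmod M S)" using x car by simp
    ultimately show "\<exists>Y\<in>carrier (qmod M S). Y \<oplus>\<^bsub>qmod M S\<^esub> X = \<zero>\<^bsub>qmod M S\<^esub>" by blast
  qed
  show ?thesis
  proof (rule moduleI[OF is_cring ag])
    fix a X assume "a \<in> carrier R" "X \<in> carrier (qmod M S)"
    then show "a \<odot>\<^bsub>qmod M S\<^esub> X \<in> carrier (qmod M S)" unfolding car using qs by auto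
  next
    fix a b X assume "a \<in> carrier R" "b \<in> carrier R" "X \<in> carrier (qmod M S)"
    then show "(a \<oplus> b) \<odot>\<^bsub>qmod M S\<^esub> X = a \<odot>\<^bsub>qmod M S\<^esub> X \<oplus>\<^bsub>qmod M S\<^esub> b \<odot>\<^bsub>qmod M S\<^esub> X"
      unfolding car using qs qa by (auto simp: smult_l_distr)
  next
    fix a X Y assume "a \<in> carrier R" "X \<in> carrier (qmod M S)" "Y \<in> carrier (qmod M S)"
    then show "a \<odot>\<^bsub>qmod M S\<^esub> (X \<oplus>\<^bsub>qmod M S\<^esub> Y) = a \<odot>\<^bsub>qmod M S\<^esub> X \<oplus>\<^bsub>qmod M S\<^esub> a \<odot>\<^bsub>qmod M S\<^esub> Y"
      unfolding car using qs qa by (auto simp: smult_r_distr)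
  next
    fix a b X assume "a \<in> carrier R" "b \<in> carrier R" "X \<in> carrier (qmod M S)"
    then show "(a \<otimes> b) \<odot>\<^bsub>qmod M S\<^esub> X = a \<odot>\<^bsub>qmod M S\<^esub> (b \<odot>\<^bsub>qmod M S\<^esub> X)"
      unfolding car using qs by (auto simp: smult_assoc1)
  next
    fix X assume "X \<in> carrier (qmod M S)"
    then show "\<one> \<odot>\<^bsub>qmod M S\<^esub> X = X" unfolding car using qs by auto
  qed
qed

lemma ideal_module_submodule:
  fixes M :: "('a, 'n) module"
  assumes MM: "module R M" and K: "K \<subseteq> carrier R"
  shows "submodule (ideal_module R M K) R M"
proof -
  interpret module R M by (rule MM)
  let ?F = "{H. submodule H R M \<and> {a \<odot>\<^bsub>M\<^esub> m | a m. a \<in> K \<and> m \<in> carrier M} \<subseteq> H}"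
  have cF: "carrier M \<in> ?F" using carrier_is_submodule K by auto
  have im: "ideal_module R M K = \<Inter>?F" unfolding ideal_module_def by simp
  show ?thesis unfolding im
  proof (rule submoduleI)
    show "\<Inter>?F \<subseteq> carrier M" using cF by blast
    show "\<zero>\<^bsub>M\<^esub> \<in> \<Inter>?F"
      using subgroup.one_closed[OF submodule.axioms(1)] by fastforce
    show "\<ominus>\<^bsub>M\<^esub> a \<in> \<Inter>?F" if "a \<in> \<Inter>?F" for a
      using that submoduleE(3) by blast
    show "a \<oplus>\<^bsub>M\<^esub> b \<in> \<Inter>?F" if "a \<in> \<Inter>?F" "b \<in> \<Inter>?F" for a b
      using that submoduleE(5) by blast
    show "a \<odot>\<^bsub>M\<^esub> x \<in> \<Inter>?F" if "a \<in> carrier R" "x \<in> \<Inter>?F" for a x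
      using that submoduleE(4) by blast
  qed
qed

lemma ideal_module_gen:
  "a \<in> K \<Longrightarrow> m \<in> carrier M \<Longrightarrow> a \<odot>\<^bsub>M\<^esub> m \<in> ideal_module R M K"
  unfolding ideal_module_def by blast

lemma ideal_module_least:
  "submodule H R M \<Longrightarrow> (\<And>a m. a \<in> K \<Longrightarrow> m \<in> carrier M \<Longrightarrow> a \<odot>\<^bsub>M\<^esub> m \<in> H)
   \<Longrightarrow> ideal_module R M K \<subseteq> H"
  unfolding ideal_module_def by blast

lemma ideal_module_mono:
  "K \<subseteq> L \<Longrightarrow> ideal_module R M K \<subseteq> ideal_module R M L"
  unfolding ideal_module_def by blast

lemma key:
  fixes R :: "'a ring" and N :: "('a, 'n) module"
  assumes N: "module R N" and K: "K \<subseteq> carrier R" and L: "L \<subseteq> carrier R"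
    and cog: "cogenerator_module TYPE(('a + 'n) set) R N"
    and hyp: "\<forall>u\<in>carrier N. ideal_kills N K u \<longrightarrow> ideal_kills N L u"
  shows "ideal_module R N L \<subseteq> ideal_module R N K"
proof
  interpret module R N by (rule N)
  let ?S = "ideal_module R N K"
  have S: "submodule ?S R N" by (rule ideal_module_submodule[OF N K])
  let ?Q = "qmod N ?S :: ('a, ('a + 'n) set) module"
  have Q: "module R ?Q" by (rule qmod_module[OF S])
  have zS: "\<zero>\<^bsub>N\<^esub> \<in> ?S" using subgroup.one_closed[OF submodule.axioms(1)[OF S]] by simp
  have zer: "\<zero>\<^bsub>?Q\<^esub> = qcls N ?S \<zero>\<^bsub>N\<^esub>" by (simp add: qmod_def)
  have car: "carrier ?Q = qcls N ?S ` carrier N" by (simp add: qmod_def)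
  fix x assume xL: "x \<in> ideal_module R N L"
  have xc: "x \<in> carrier N" using xL ideal_module_submodule[OF N L] submoduleE(1) by blast
  show "x \<in> ?S"
  proof (rule ccontr)
    assume nx: "x \<notin> ?S"
    have "x \<ominus>\<^bsub>N\<^esub> \<zero>\<^bsub>N\<^esub> = x" using xc by (simp add: M.minus_eq)
    hence ne: "qcls N ?S x \<noteq> \<zero>\<^bsub>?Q\<^esub>" using qcls_eq[OF S xc] nx zer by simp
    obtain f where f: "mod_hom R ?Q N f" and fx: "f (qcls N ?S x) \<noteq> \<zero>\<^bsub>N\<^esub>"
      using cog Q ne xc car unfolding cogenerator_module_def by blast
    have fc: "\<And>y. y \<in> carrier N \<Longrightarrow> f (qcls N ?S y) \<in> carrier N"
      using f car unfolding mod_hom_def by auto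
    have fadd: "\<And>y z. y \<in> carrier N \<Longrightarrow> z \<in> carrier N \<Longrightarrow>
        f (qcls N ?S (y \<oplus>\<^bsub>N\<^esub> z)) = f (qcls N ?S y) \<oplus>\<^bsub>N\<^esub> f (qcls N ?S z)"
      using f car qadd[OF S] unfolding mod_hom_def by (metis image_eqI)
    have fsm: "\<And>r y. r \<in> carrier R \<Longrightarrow> y \<in> carrier N \<Longrightarrow>
        f (qcls N ?S (r \<odot>\<^bsub>N\<^esub> y)) = r \<odot>\<^bsub>N\<^esub> f (qcls N ?S y)"
      using f car qsmult[OF S] unfolding mod_hom_def by (metis image_eqI)
    have f0: "f (qcls N ?S \<zero>\<^bsub>N\<^esub>) = \<zero>\<^bsub>N\<^esub>"
      using fsm[of "\<zero>\<^bsub>R\<^esub>" "\<zero>\<^bsub>N\<^esub>"] fc[of "\<zero>\<^bsub>N\<^esub>"] by simp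
    have fS: "f (qcls N ?S y) = \<zero>\<^bsub>N\<^esub>" if "y \<in> ?S" for y
    proof -
      have yc: "y \<in> carrier N" using that submoduleE(1)[OF S] by blast
      have "y \<ominus>\<^bsub>N\<^esub> \<zero>\<^bsub>N\<^esub> = y" using yc by (simp add: M.minus_eq)
      hence "qcls N ?S y = qcls N ?S \<zero>\<^bsub>N\<^esub>" using qcls_eq[OF S yc] that by simp
      thus ?thesis using f0 by simp
    qed
    let ?ker = "{y \<in> carrier N. f (qcls N ?S y) = \<zero>\<^bsub>N\<^esub>}"
    have kersub: "submodule ?ker R N"
    proof (rule submoduleI)
      show "?ker \<subseteq> carrier N" by blast
      show "\<zero>\<^bsub>N\<^esub> \<in> ?ker" using f0 by simp
      show "\<ominus>\<^bsub>N\<^esub> a \<in> ?ker" if "a \<in> ?ker" for a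
      proof -
        have "\<ominus>\<^bsub>N\<^esub> a = (\<ominus>\<^bsub>R\<^esub> \<one>\<^bsub>R\<^esub>) \<odot>\<^bsub>N\<^esub> a" using that by (simp add: smult_l_minus)
        thus ?thesis using that fsm[of "\<ominus>\<^bsub>R\<^esub> \<one>\<^bsub>R\<^esub>" a] by simp
      qed
      show "a \<oplus>\<^bsub>N\<^esub> b \<in> ?ker" if "a \<in> ?ker" "b \<in> ?ker" for a b
        using that fadd by simp
      show "a \<odot>\<^bsub>N\<^esub> y \<in> ?ker" if "a \<in> carrier R" "y \<in> ?ker" for a y
        using that fsm by simp
    qed
    have "ideal_module R N L \<subseteq> ?ker"
    proof (rule ideal_module_least[OF kersub])
      fix a m assume a: "a \<in> L" and m: "m \<in> carrier N"
      have "ideal_kills N K (f (qcls N ?S m))"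
        unfolding ideal_kills_def
      proof
        fix k assume k: "k \<in> K"
        have "k \<odot>\<^bsub>N\<^esub> f (qcls N ?S m) = f (qcls N ?S (k \<odot>\<^bsub>N\<^esub> m))"
          using fsm k K m by auto
        also have "\<dots> = \<zero>\<^bsub>N\<^esub>" using fS ideal_module_gen[OF k m, of R] by simp
        finally show "k \<odot>\<^bsub>N\<^esub> f (qcls N ?S m) = \<zero>\<^bsub>N\<^esub>" .
      qed
      hence "ideal_kills N L (f (qcls N ?S m))" using hyp fc m by blast
      hence "a \<odot>\<^bsub>N\<^esub> f (qcls N ?S m) = \<zero>\<^bsub>N\<^esub>" using a unfolding ideal_kills_def by blast
      thus "a \<odot>\<^bsub>N\<^esub> m \<in> ?ker" using fsm a L m by auto
    qed
    thus False using xL fx by blast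
  qed
qed

lemma kills_sum:
  assumes "module R N" "X \<subseteq> carrier R" "u \<in> carrier N" "v \<in> carrier N"
    "ideal_kills N X u" "ideal_kills N X v"
  shows "ideal_kills N X (u \<oplus>\<^bsub>N\<^esub> v)"
proof -
  interpret module R N by (rule assms(1))
  show ?thesis using assms unfolding ideal_kills_def by (auto simp: smult_r_distr)
qed

lemma kills_cancel:
  assumes "module R N" "X \<subseteq> carrier R" "u \<in> carrier N" "v \<in> carrier N"
    "ideal_kills N X (u \<oplus>\<^bsub>N\<^esub> v)" "ideal_kills N X v"
  shows "ideal_kills N X u"
proof -
  interpret module R N by (rule assms(1))
  show ?thesis unfolding ideal_kills_def
  proof
    fix a assume a: "a \<in> X"
    hence ar: "a \<in> carrier R" using assms(2) by blast
    have "a \<odot>\<^bsub>N\<^esub> (u \<oplus>\<^bsub>N\<^esub> v) = a \<odot>\<^bsub>N\<^esub> u"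
      using assms(3,4,6) a ar unfolding ideal_kills_def by (simp add: smult_r_distr)
    thus "a \<odot>\<^bsub>N\<^esub> u = \<zero>\<^bsub>N\<^esub>" using assms(5) a unfolding ideal_kills_def by simp
  qed
qed

theorem mainTheorem7:
  fixes R :: "'a ring" and N :: "('a, 'n) module" and I J :: "'a set"
  assumes "cring R"
    and "ideal I R" and "ideal J R"
    and "module R N"
    and "injective_module TYPE(('a + 'n) set) R N"
    and "cogenerator_module TYPE(('a + 'n) set) R N"
  shows "(I_reduced R N I \<longrightarrow> I_coreduced R N I) \<and>
         (IJ_prime R N I J \<longrightarrow> IJ_coprime R N I J)"
proof -
  interpret cring R by (rule assms(1))
  have Ic: "I \<subseteq> carrier R" using assms(2) by (meson ideal.Icarr subsetI)
  have Jc: "J \<subseteq> carrier R" using assms(3) by (meson ideal.Icarr subsetI)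
  have IIc: "I \<cdot>\<^bsub>R\<^esub> I \<subseteq> carrier R" using ideal_prod_in_carrier assms(2) by blast
  have IJc: "I \<cdot>\<^bsub>R\<^esub> J \<subseteq> carrier R" using ideal_prod_in_carrier assms(2,3) by blast
  have II: "I \<cdot>\<^bsub>R\<^esub> I \<subseteq> I" using ideal_prod_inter assms(2) by blast
  have IJI: "I \<cdot>\<^bsub>R\<^esub> J \<subseteq> I" and IJJ: "I \<cdot>\<^bsub>R\<^esub> J \<subseteq> J"
    using ideal_prod_inter assms(2,3) by blast+
  have P1: "I_coreduced R N I" if red: "I_reduced R N I"
  proof -
    have "ideal_module R N I \<subseteq> ideal_module R N (I \<cdot>\<^bsub>R\<^esub> I)"
      by (rule key[OF assms(4) IIc Ic assms(6)]) (use red in \<open>simp add: I_reduced_def\<close>)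
    moreover have "ideal_module R N (I \<cdot>\<^bsub>R\<^esub> I) \<subseteq> ideal_module R N I"
      by (rule ideal_module_mono[OF II])
    ultimately show ?thesis unfolding I_coreduced_def by blast
  qed
  have P2: "IJ_coprime R N I J" if pr: "IJ_prime R N I J"
  proof -
    let ?K = "I \<cdot>\<^bsub>R\<^esub> J"
    have D: "(\<forall>u\<in>carrier N. ideal_kills N ?K u \<longrightarrow> ideal_kills N I u) \<or>
             (\<forall>u\<in>carrier N. ideal_kills N ?K u \<longrightarrow> ideal_kills N J u)"
    proof (rule ccontr)
      assume "\<not> ?thesis"
      then obtain u v where u: "u \<in> carrier N" "ideal_kills N ?K u" "\<not> ideal_kills N I u"
        and v: "v \<in> carrier N" "ideal_kills N ?K v" "\<not> ideal_kills N J v" by blast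
      have uJ: "ideal_kills N J u" using pr u unfolding IJ_prime_def by blast
      have vI: "ideal_kills N I v" using pr v unfolding IJ_prime_def by blast
      have wc: "u \<oplus>\<^bsub>N\<^esub> v \<in> carrier N"
        using u(1) v(1) assms(4) by (metis abelian_group.axioms(1) abelian_monoid.a_closed module.axioms(2))
      have w: "ideal_kills N ?K (u \<oplus>\<^bsub>N\<^esub> v)"
        by (rule kills_sum[OF assms(4) IJc u(1) v(1) u(2) v(2)])
      have "ideal_kills N I (u \<oplus>\<^bsub>N\<^esub> v) \<or> ideal_kills N J (u \<oplus>\<^bsub>N\<^esub> v)"
        using pr w wc unfolding IJ_prime_def by blast
      thus False
      proof
        assume "ideal_kills N I (u \<oplus>\<^bsub>N\<^esub> v)"
        thus False using kills_cancel[OF assms(4) Ic u(1) v(1) _ vI] u(3) by blast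
      next
        assume h: "ideal_kills N J (u \<oplus>\<^bsub>N\<^esub> v)"
        have "u \<oplus>\<^bsub>N\<^esub> v = v \<oplus>\<^bsub>N\<^esub> u"
          using u(1) v(1) assms(4) by (metis abelian_group.axioms(1) abelian_monoid.a_comm module.axioms(2))
        thus False using kills_cancel[OF assms(4) Jc v(1) u(1) _ uJ] v(3) h by simp
      qed
    qed
    thus ?thesis
    proof
      assume h: "\<forall>u\<in>carrier N. ideal_kills N ?K u \<longrightarrow> ideal_kills N I u"
      have "ideal_module R N I \<subseteq> ideal_module R N ?K" by (rule key[OF assms(4) IJc Ic assms(6) h])
      moreover have "ideal_module R N ?K \<subseteq> ideal_module R N I" by (rule ideal_module_mono[OF IJI])
      ultimately show ?thesis unfolding IJ_coprime_def by blast
    next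
      assume h: "\<forall>u\<in>carrier N. ideal_kills N ?K u \<longrightarrow> ideal_kills N J u"
      have "ideal_module R N J \<subseteq> ideal_module R N ?K" by (rule key[OF assms(4) IJc Jc assms(6) h])
      moreover have "ideal_module R N ?K \<subseteq> ideal_module R N J" by (rule ideal_module_mono[OF IJJ])
      ultimately show ?thesis unfolding IJ_coprime_def by blast
    qed
  qed
  show ?thesis using P1 P2 by blast
qed

end
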